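(* Let $\sigma$ be a finite simplex whose vertices are linearly ordered by $\le$, let $Y$ be a topological space, and let $\Phi,\Psi:\sigma\rightrightarrows Y$ be mappings (to nonempty subsets) such that for each $v\in\sigma$, $\Phi(v)$ is contractible in $\Psi(v)$, and $\Psi(v)\subset\Phi(u)$ for all $u,v\in\sigma$ with $u<v$. For every $v\in\sigma$ fix a contraction $H_v:\Phi(v)\times[0,1]\to\Psi(v)$ of $\Phi(v)$ into a point $p_v\in\Psi(v)$. Then there exists a unique continuous map $h:|\sigma|\to Y$ such that (i) $h(v)=p_v$ for every $v\in\sigma$; (ii) $h(tv+(1-t)z)=H_v(h(z),t)$ for all $z\in|\tau|$ and $t\in[0,1]$, whenever $\tau\subset\sigma$ is a nonempty face and $v\in\sigma$ satisfies $v<u$ for every $u\in\tau$.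
   Context: $|\sigma|$ denotes the geometric simplex (convex hull of the vertices of $\sigma$, taken linearly independent in a linear space), and $|\tau|\subset|\sigma|$ that of a face $\tau$; $tv+(1-t)z$ is the usual convex combination in $|\sigma|$. A contraction of $S\subset T$ into $p\in T$ is a continuous $H:S\times[0,1]\to T$ with $H(y,0)=y$, $H(y,1)=p$ for all $y\in S$; $\Phi(v)$ is contractible in $\Psi(v)$ if such a contraction into $\Psi(v)$ exists. *)

theory Defs
  imports "HOL-Analysis.Analysis"
begin

definition contraction_into ::
  "'y topology \<Rightarrow> 'y set \<Rightarrow> 'y set \<Rightarrow> 'y \<Rightarrow> ('y \<times> real \<Rightarrow> 'y) \<Rightarrow> bool" where
  "contraction_into Y S T p H \<longleftrightarrow>
     continuous_map (prod_topology (subtopology Y S) (top_of_set {0..1})) (subtopology Y T) H \<and>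
     (\<forall>y\<in>S. H (y, 0) = y \<and> H (y, 1) = p)"

end

theory Submission
  imports Defs
begin

lemma coord_unique:
  fixes a :: "'a::real_vector"
  assumes "a \<notin> span S" "z \<in> span S" "z' \<in> span S"
    and "t *\<^sub>R a + (1 - t) *\<^sub>R z = t' *\<^sub>R a + (1 - t') *\<^sub>R z'"
  shows "t = t'"
proof (rule ccontr)
  assume ne: "t \<noteq> t'"
  have "(t - t') *\<^sub>R a = (1 - t') *\<^sub>R z' - (1 - t) *\<^sub>R z"
    using assms(4) by (simp add: algebra_simps)
  also have "\<dots> \<in> span S" using assms(2,3) by (intro span_diff span_scale)
  finally have "inverse (t - t') *\<^sub>R ((t - t') *\<^sub>R a) \<in> span S" by (rule span_scale)
  with ne assms(1) show False by simp
qed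

definition prop2 :: "'v::linorder set \<Rightarrow> ('v \<Rightarrow> 'a::euclidean_space) \<Rightarrow> ('v \<Rightarrow> ('y \<times> real \<Rightarrow> 'y)) \<Rightarrow> ('a \<Rightarrow> 'y) \<Rightarrow> bool" where
  "prop2 \<sigma> e H h \<longleftrightarrow> (\<forall>\<tau> v z t. \<tau> \<subseteq> \<sigma> \<and> \<tau> \<noteq> {} \<and> v \<in> \<sigma> \<and> (\<forall>u\<in>\<tau>. v < u) \<and>
                  z \<in> convex hull (e ` \<tau>) \<and> t \<in> {0..1} \<longrightarrow>
                  h (t *\<^sub>R e v + (1 - t) *\<^sub>R z) = H v (h z, t))"

lemma prop2_mono: "\<rho> \<subseteq> \<sigma> \<Longrightarrow> prop2 \<sigma> e H h \<Longrightarrow> prop2 \<rho> e H h"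
  unfolding prop2_def by (meson order_trans subsetD)

lemma uniq:
  assumes "finite \<sigma>" "\<sigma> \<noteq> {}"
    and "\<forall>v\<in>\<sigma>. h (e v) = p v" "\<forall>v\<in>\<sigma>. h' (e v) = p v"
    and "prop2 \<sigma> e H h" "prop2 \<sigma> e H h'"
  shows "\<forall>x\<in>convex hull (e ` \<sigma>). h' x = h x"
  using assms
proof (induction "card \<sigma>" arbitrary: \<sigma> rule: less_induct)
  case less
  define v0 where "v0 = Min \<sigma>"
  define \<rho> where "\<rho> = \<sigma> - {v0}"
  have v0: "v0 \<in> \<sigma>" "\<And>u. u \<in> \<rho> \<Longrightarrow> v0 < u"
    using less.prems(1,2) by (auto simp: v0_def \<rho>_def order.strict_iff_order)
  have sig: "\<sigma> = insert v0 \<rho>" using v0 \<rho>_def by auto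
  show ?case
  proof (cases "\<rho> = {}")
    case True
    then show ?thesis using sig less.prems(3,4) v0 by auto
  next
    case False
    have IH: "\<forall>x\<in>convex hull (e ` \<rho>). h' x = h x"
    proof (rule less.hyps)
      show "card \<rho> < card \<sigma>" using less.prems(1) v0 \<rho>_def by (metis card_Diff1_less)
      show "finite \<rho>" "\<rho> \<noteq> {}" using less.prems(1) False \<rho>_def by auto
      show "\<forall>v\<in>\<rho>. h (e v) = p v" "\<forall>v\<in>\<rho>. h' (e v) = p v"
        using less.prems(3,4) \<rho>_def by auto
      show "prop2 \<rho> e H h" "prop2 \<rho> e H h'"
        using less.prems(5,6) prop2_mono[of \<rho> \<sigma>] \<rho>_def by blast+
    qed
    show ?thesis
    proof
      fix x assume "x \<in> convex hull (e ` \<sigma>)"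
      then have "x \<in> convex hull (insert (e v0) (e ` \<rho>))" using sig by simp
      then obtain u w z where uwz: "u \<ge> 0" "w \<ge> 0" "u + w = 1" "z \<in> convex hull (e ` \<rho>)"
        "x = u *\<^sub>R e v0 + w *\<^sub>R z"
        using False by (subst (asm) convex_hull_insert) auto
      have w: "w = 1 - u" using uwz(3) by simp
      have t01: "u \<in> {0..1}" using uwz by auto
      have pre: "\<rho> \<subseteq> \<sigma>" "\<rho> \<noteq> {}" "v0 \<in> \<sigma>" "\<forall>u\<in>\<rho>. v0 < u"
        using sig v0 False by auto
      have "h x = H v0 (h z, u)" "h' x = H v0 (h' z, u)"
        using less.prems(5,6) pre uwz(4) t01 unfolding prop2_def uwz(5) w by blast+
      then show "h' x = h x" using IH uwz by simp
    qed
  qed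
qed


lemma exist:
  fixes \<sigma> :: "'v::linorder set"
    and e :: "'v \<Rightarrow> 'a::euclidean_space"
    and Y :: "'y topology"
  assumes "finite \<sigma>" and "\<sigma> \<noteq> {}"
    and "inj_on e \<sigma>" and "independent (e ` \<sigma>)"
    and "\<And>v. v \<in> \<sigma> \<Longrightarrow> \<Phi> v \<noteq> {} \<and> \<Phi> v \<subseteq> topspace Y"
    and "\<And>v. v \<in> \<sigma> \<Longrightarrow> \<Psi> v \<noteq> {} \<and> \<Psi> v \<subseteq> topspace Y"
    and "\<And>u v. u \<in> \<sigma> \<Longrightarrow> v \<in> \<sigma> \<Longrightarrow> u < v \<Longrightarrow> \<Psi> v \<subseteq> \<Phi> u"
    and "\<And>v. v \<in> \<sigma> \<Longrightarrow> p v \<in> \<Psi> v"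
    and "\<And>v. v \<in> \<sigma> \<Longrightarrow> contraction_into Y (\<Phi> v) (\<Psi> v) (p v) (H v)"
  shows "\<exists>h. continuous_map (top_of_set (convex hull (e ` \<sigma>))) Y h \<and>
             (\<forall>v\<in>\<sigma>. h (e v) = p v) \<and> prop2 \<sigma> e H h \<and>
             (\<forall>x\<in>convex hull (e ` \<sigma>). \<exists>w\<in>\<sigma>. h x \<in> \<Psi> w)"
  using assms
proof (induction "card \<sigma>" arbitrary: \<sigma> rule: less_induct)
  case less
  define v0 where "v0 = Min \<sigma>"
  define \<rho> where "\<rho> = \<sigma> - {v0}"
  have v0: "v0 \<in> \<sigma>" "\<And>u. u \<in> \<rho> \<Longrightarrow> v0 < u"
    using less.prems(1,2) by (auto simp: v0_def \<rho>_def order.strict_iff_order)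
  have sig: "\<sigma> = insert v0 \<rho>" using v0 \<rho>_def by auto
  have Hv0: "continuous_map (prod_topology (subtopology Y (\<Phi> v0)) (top_of_set {0..1})) (subtopology Y (\<Psi> v0)) (H v0)"
    "\<And>y. y \<in> \<Phi> v0 \<Longrightarrow> H v0 (y, 0) = y \<and> H v0 (y, 1) = p v0"
    using less.prems(9)[OF v0(1)] unfolding contraction_into_def by auto
  have pv0: "p v0 \<in> \<Psi> v0" "\<Psi> v0 \<subseteq> topspace Y" "\<Phi> v0 \<subseteq> topspace Y"
    using less.prems(5,6,8) v0(1) by auto
  show ?case
  proof (cases "\<rho> = {}")
    case True
    then have s1: "\<sigma> = {v0}" using sig by simp
    show ?thesis
    proof (intro exI[of _ "\<lambda>x. p v0"] conjI)
      show "continuous_map (top_of_set (convex hull e ` \<sigma>)) Y (\<lambda>x. p v0)"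
        using pv0 by auto
      show "\<forall>v\<in>\<sigma>. p v0 = p v" using s1 by simp
      show "prop2 \<sigma> e H (\<lambda>x. p v0)" unfolding prop2_def s1
        by (metis insertCI less_irrefl subset_singletonD)
      show "\<forall>x\<in>convex hull e ` \<sigma>. \<exists>w\<in>\<sigma>. p v0 \<in> \<Psi> w" using pv0 v0 by auto
    qed
  next
    case False
    obtain g where g: "continuous_map (top_of_set (convex hull (e ` \<rho>))) Y g"
      "\<forall>v\<in>\<rho>. g (e v) = p v" "prop2 \<rho> e H g"
      "\<forall>x\<in>convex hull (e ` \<rho>). \<exists>w\<in>\<rho>. g x \<in> \<Psi> w"
    proof -
      have "\<exists>h. continuous_map (top_of_set (convex hull (e ` \<rho>))) Y h \<and>
             (\<forall>v\<in>\<rho>. h (e v) = p v) \<and> prop2 \<rho> e H h \<and>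
             (\<forall>x\<in>convex hull (e ` \<rho>). \<exists>w\<in>\<rho>. h x \<in> \<Psi> w)"
      proof (rule less.hyps)
        show "card \<rho> < card \<sigma>" using less.prems(1) v0 \<rho>_def by (metis card_Diff1_less)
        show "finite \<rho>" "\<rho> \<noteq> {}" using less.prems(1) False \<rho>_def by auto
        show "inj_on e \<rho>" using less.prems(3) \<rho>_def by (simp add: inj_on_diff)
        show "independent (e ` \<rho>)" using less.prems(4) \<rho>_def
          by (metis Diff_subset dependent_mono image_mono)
      qed (use less.prems \<rho>_def in auto)
      then show ?thesis using that by blast
    qed
    define a where "a = e v0"
    define S where "S = e ` \<rho>"
    have eS: "e ` \<sigma> = insert a S" using sig a_def S_def by simp
    have aS: "a \<notin> S"
    proof
      assume "a \<in> S"
      then obtain u where u: "u \<in> \<rho>" "e u = e v0" unfolding a_def S_def by auto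
      then have "u = v0" using inj_onD[OF less.prems(3) u(2)] v0(1) \<rho>_def by blast
      then show False using u(1) \<rho>_def by simp
    qed
    have aspan: "a \<notin> span S"
      using less.prems(4) aS unfolding eS by (simp add: independent_insert)
    have Sne: "S \<noteq> {}" using False S_def by simp
    have hullspan: "convex hull S \<subseteq> span S" by (rule convex_hull_subset_span)
    have gPhi: "g z \<in> \<Phi> v0" if zS: "z \<in> convex hull S" for z
    proof -
      obtain w where "w \<in> \<rho>" "g z \<in> \<Psi> w" using g(4) zS S_def by auto
      then show ?thesis using less.prems(7)[of v0 w] v0 sig by auto
    qed
    have Hin: "H v0 (y, t) \<in> \<Psi> v0" if "y \<in> \<Phi> v0" "t \<in> {0..1}" for y t
    proof -
      have "(y, t) \<in> (topspace Y \<inter> \<Phi> v0) \<times> {0..1}" using that pv0 by auto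
      then show ?thesis using continuous_map_image_subset_topspace[OF Hv0(1)] by auto
    qed
    define h where "h x = (SOME y. \<exists>z\<in>convex hull S. \<exists>t\<in>{0..1}. x = t *\<^sub>R a + (1 - t) *\<^sub>R z \<and> y = H v0 (g z, t))" for x
    have hF: "h (t *\<^sub>R a + (1 - t) *\<^sub>R z) = H v0 (g z, t)" if z: "z \<in> convex hull S" and t: "t \<in> {0..1}" for z t
    proof -
      let ?x = "t *\<^sub>R a + (1 - t) *\<^sub>R z"
      have "\<exists>z'\<in>convex hull S. \<exists>t'\<in>{0..1}. ?x = t' *\<^sub>R a + (1 - t') *\<^sub>R z' \<and> h ?x = H v0 (g z', t')"
        unfolding h_def by (rule someI_ex) (use z t in blast)
      then obtain z' t' where z't': "z' \<in> convex hull S" "t' \<in> {0..1}"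
        "?x = t' *\<^sub>R a + (1 - t') *\<^sub>R z'" "h ?x = H v0 (g z', t')" by blast
      have tt: "t' = t" using coord_unique[OF aspan _ _ z't'(3)] z z't'(1) hullspan by blast
      show ?thesis
      proof (cases "t = 1")
        case True
        then show ?thesis using tt z't' Hv0(2) gPhi z by simp
      next
        case False
        have "z' = z" using z't'(3) tt False by simp
        then show ?thesis using z't' tt by simp
      qed
    qed
    have hg: "h z = g z" if "z \<in> convex hull S" for z
      using hF[OF that, of 0] Hv0(2)[OF gPhi[OF that]] by simp
    have hullins: "convex hull (e ` \<sigma>) = (\<lambda>(z, t). t *\<^sub>R a + (1 - t) *\<^sub>R z) ` ((convex hull S) \<times> {0..1})"
    proof -
      have "convex hull (e ` \<sigma>) = {x. \<exists>u\<ge>0. \<exists>v\<ge>0. \<exists>b. (u + v = 1) \<and> b \<in> (convex hull S) \<and> (x = u *\<^sub>R a + v *\<^sub>R b)}"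
        unfolding eS by (rule convex_hull_insert[OF Sne])
      also have "\<dots> = (\<lambda>(z, t). t *\<^sub>R a + (1 - t) *\<^sub>R z) ` ((convex hull S) \<times> {0..1})"
      proof (intro equalityI subsetI)
        fix x assume "x \<in> {x. \<exists>u\<ge>0. \<exists>v\<ge>0. \<exists>b. (u + v = 1) \<and> b \<in> (convex hull S) \<and> (x = u *\<^sub>R a + v *\<^sub>R b)}"
        then obtain u v b where "u \<ge> 0" "v \<ge> 0" "u + v = 1" "b \<in> convex hull S" "x = u *\<^sub>R a + v *\<^sub>R b" by blast
        then show "x \<in> (\<lambda>(z, t). t *\<^sub>R a + (1 - t) *\<^sub>R z) ` ((convex hull S) \<times> {0..1})"
          by (intro image_eqI[of _ _ "(b, u)"]) auto
      next
        fix x assume "x \<in> (\<lambda>(z, t). t *\<^sub>R a + (1 - t) *\<^sub>R z) ` ((convex hull S) \<times> {0..1})"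
        then obtain z t where "z \<in> convex hull S" "t \<in> {0..1}" "x = t *\<^sub>R a + (1 - t) *\<^sub>R z" by auto
        then show "x \<in> {x. \<exists>u\<ge>0. \<exists>v\<ge>0. \<exists>b. (u + v = 1) \<and> b \<in> (convex hull S) \<and> (x = u *\<^sub>R a + v *\<^sub>R b)}"
          by (intro CollectI exI[of _ t] conjI exI[of _ "1 - t"] exI[of _ z]) auto
      qed
      finally show ?thesis .
    qed
    show ?thesis
    proof (intro exI[of _ h] conjI)
      let ?F = "\<lambda>(z, t). t *\<^sub>R a + (1 - t) *\<^sub>R z"
      let ?D = "(convex hull S) \<times> {0..1::real}"
      have Fcont: "continuous_on ?D ?F"
        unfolding case_prod_unfold by (intro continuous_intros)
      have "finite S" using less.prems(1) S_def \<rho>_def by simp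
      then have cD: "compact ?D"
        by (intro compact_Times compact_convex_hull finite_imp_compact compact_Icc)
      have qF: "quotient_map (top_of_set ?D) (top_of_set (convex hull (e ` \<sigma>))) ?F"
      proof (rule continuous_imp_quotient_map)
        show "continuous_map (top_of_set ?D) (top_of_set (convex hull (e ` \<sigma>))) ?F"
          using Fcont hullins by (auto simp: continuous_map_in_subtopology)
        show "compact_space (top_of_set ?D)" using cD
          by (simp add: compact_space_subtopology)
        show "Hausdorff_space (top_of_set (convex hull (e ` \<sigma>)))"
          by (simp add: Hausdorff_space_subtopology)
        show "?F ` topspace (top_of_set ?D) = topspace (top_of_set (convex hull (e ` \<sigma>)))"
          using hullins by simp
      qed
      have gc: "continuous_map (top_of_set (convex hull S)) (subtopology Y (\<Phi> v0)) g"
        using g(1) gPhi S_def by (auto simp: continuous_map_in_subtopology)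
      have pc: "continuous_map (top_of_set ?D) (prod_topology (subtopology Y (\<Phi> v0)) (top_of_set {0..1})) (\<lambda>(z, t). (g z, t))"
      proof -
        have "continuous_map (prod_topology (top_of_set (convex hull S)) (top_of_set {0..1})) (prod_topology (subtopology Y (\<Phi> v0)) (top_of_set {0..1})) (\<lambda>(z, t). (g z, id t))"
          using gc by (subst continuous_map_prod_top) auto
        then show ?thesis by simp
      qed
      have c2: "continuous_map (top_of_set ?D) Y (\<lambda>(z, t). H v0 (g z, t))"
      proof -
        have "continuous_map (top_of_set ?D) (subtopology Y (\<Psi> v0)) (H v0 \<circ> (\<lambda>(z, t). (g z, t)))"
          by (rule continuous_map_compose[OF pc Hv0(1)])
        then have "continuous_map (top_of_set ?D) Y (H v0 \<circ> (\<lambda>(z, t). (g z, t)))"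
          by (rule continuous_map_into_fulltopology)
        then show ?thesis by (simp add: case_prod_unfold o_def)
      qed
      have "continuous_map (top_of_set ?D) Y (h \<circ> ?F)"
        by (rule continuous_map_eq[OF c2]) (auto simp: hF)
      then show "continuous_map (top_of_set (convex hull e ` \<sigma>)) Y h"
        by (rule continuous_compose_quotient_map[OF qF])
      show "\<forall>v\<in>\<sigma>. h (e v) = p v"
      proof
        fix v assume "v \<in> \<sigma>"
        show "h (e v) = p v"
        proof (cases "v = v0")
          case True
          obtain z where "z \<in> S" using Sne by blast
          then have z: "z \<in> convex hull S" by (simp add: hull_inc)
          have "h (1 *\<^sub>R a + (1 - 1) *\<^sub>R z) = H v0 (g z, 1)" by (rule hF[OF z]) auto
          then show ?thesis using True a_def Hv0(2) gPhi[OF z] by simp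
        next
          case False
          then have "v \<in> \<rho>" using \<open>v \<in> \<sigma>\<close> \<rho>_def by auto
          then have "e v \<in> convex hull S" using S_def by (simp add: hull_inc)
          then show ?thesis using hg g(2) \<open>v \<in> \<rho>\<close> by simp
        qed
      qed
      show "prop2 \<sigma> e H h"
        unfolding prop2_def
      proof (intro allI impI, elim conjE)
        fix \<tau> v z and t :: real
        assume \<tau>: "\<tau> \<subseteq> \<sigma>" "\<tau> \<noteq> {}" "v \<in> \<sigma>" "\<forall>u\<in>\<tau>. v < u" "z \<in> convex hull e ` \<tau>" "t \<in> {0..1}"
        have \<tau>\<rho>: "\<tau> \<subseteq> \<rho>"
        proof
          fix u assume "u \<in> \<tau>"
          then have "v < u" "u \<in> \<sigma>" using \<tau> by auto
          moreover have "v0 \<le> v" using \<tau>(3) less.prems(1) v0_def by simp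
          ultimately show "u \<in> \<rho>" using \<rho>_def by auto
        qed
        have zS: "z \<in> convex hull S"
          using \<tau>(5) \<tau>\<rho> S_def by (meson hull_mono image_mono subsetD)
        show "h (t *\<^sub>R e v + (1 - t) *\<^sub>R z) = H v (h z, t)"
        proof (cases "v = v0")
          case True
          then show ?thesis using hF[OF zS \<tau>(6)] hg[OF zS] a_def by simp
        next
          case False
          then have v\<rho>: "v \<in> \<rho>" using \<tau>(3) \<rho>_def by auto
          have evS: "e v \<in> convex hull S" using v\<rho> S_def by (simp add: hull_inc)
          have "t *\<^sub>R e v + (1 - t) *\<^sub>R z \<in> convex hull S"
            using convexD_alt[OF convex_convex_hull zS evS, of t] \<tau>(6) by (simp add: add.commute)
          then have "h (t *\<^sub>R e v + (1 - t) *\<^sub>R z) = g (t *\<^sub>R e v + (1 - t) *\<^sub>R z)" by (rule hg)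
          also have "\<dots> = H v (g z, t)"
            using g(3) \<tau> \<tau>\<rho> v\<rho> unfolding prop2_def by blast
          finally show ?thesis using hg[OF zS] by simp
        qed
      qed
      show "\<forall>x\<in>convex hull e ` \<sigma>. \<exists>w\<in>\<sigma>. h x \<in> \<Psi> w"
      proof
        fix x assume "x \<in> convex hull e ` \<sigma>"
        then obtain z t where "z \<in> convex hull S" "t \<in> {0..1}" "x = t *\<^sub>R a + (1 - t) *\<^sub>R z"
          unfolding hullins by auto
        then have "h x \<in> \<Psi> v0" using hF Hin gPhi by simp
        then show "\<exists>w\<in>\<sigma>. h x \<in> \<Psi> w" using v0 by blast
      qed
    qed
  qed
qed

theorem proposition3p3:
  fixes \<sigma> :: "'v::linorder set"
    and e :: "'v \<Rightarrow> 'a::euclidean_space"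
    and Y :: "'y topology"
    and \<Phi> \<Psi> :: "'v \<Rightarrow> 'y set"
    and H :: "'v \<Rightarrow> ('y \<times> real \<Rightarrow> 'y)"
    and p :: "'v \<Rightarrow> 'y"
  assumes "finite \<sigma>" and "\<sigma> \<noteq> {}"
    and "inj_on e \<sigma>" and "independent (e ` \<sigma>)"
    and "\<And>v. v \<in> \<sigma> \<Longrightarrow> \<Phi> v \<noteq> {} \<and> \<Phi> v \<subseteq> topspace Y"
    and "\<And>v. v \<in> \<sigma> \<Longrightarrow> \<Psi> v \<noteq> {} \<and> \<Psi> v \<subseteq> topspace Y"
    and "\<And>u v. u \<in> \<sigma> \<Longrightarrow> v \<in> \<sigma> \<Longrightarrow> u < v \<Longrightarrow> \<Psi> v \<subseteq> \<Phi> u"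
    and "\<And>v. v \<in> \<sigma> \<Longrightarrow> p v \<in> \<Psi> v"
    and "\<And>v. v \<in> \<sigma> \<Longrightarrow> contraction_into Y (\<Phi> v) (\<Psi> v) (p v) (H v)"
  shows "\<exists>h. continuous_map (top_of_set (convex hull (e ` \<sigma>))) Y h \<and>
             (\<forall>v\<in>\<sigma>. h (e v) = p v) \<and>
             (\<forall>\<tau> v z t. \<tau> \<subseteq> \<sigma> \<and> \<tau> \<noteq> {} \<and> v \<in> \<sigma> \<and> (\<forall>u\<in>\<tau>. v < u) \<and>
                  z \<in> convex hull (e ` \<tau>) \<and> t \<in> {0..1} \<longrightarrow>
                  h (t *\<^sub>R e v + (1 - t) *\<^sub>R z) = H v (h z, t)) \<and>
             (\<forall>h'. continuous_map (top_of_set (convex hull (e ` \<sigma>))) Y h' \<and>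
                  (\<forall>v\<in>\<sigma>. h' (e v) = p v) \<and>
                  (\<forall>\<tau> v z t. \<tau> \<subseteq> \<sigma> \<and> \<tau> \<noteq> {} \<and> v \<in> \<sigma> \<and> (\<forall>u\<in>\<tau>. v < u) \<and>
                       z \<in> convex hull (e ` \<tau>) \<and> t \<in> {0..1} \<longrightarrow>
                       h' (t *\<^sub>R e v + (1 - t) *\<^sub>R z) = H v (h' z, t))
                  \<longrightarrow> (\<forall>x\<in>convex hull (e ` \<sigma>). h' x = h x))"
  proof -
  obtain h where h: "continuous_map (top_of_set (convex hull (e ` \<sigma>))) Y h"
    "\<forall>v\<in>\<sigma>. h (e v) = p v" "prop2 \<sigma> e H h"
    using exist[where \<sigma>=\<sigma> and e=e and Y=Y and \<Phi>=\<Phi> and \<Psi>=\<Psi> and p=p and H=H, OF assms] by blast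
  show ?thesis
  proof (intro exI[of _ h] conjI allI impI)
    show "continuous_map (top_of_set (convex hull (e ` \<sigma>))) Y h" by (rule h(1))
    show "\<forall>v\<in>\<sigma>. h (e v) = p v" by (rule h(2))
  next
    fix \<tau> v z and t :: real
    assume "\<tau> \<subseteq> \<sigma> \<and> \<tau> \<noteq> {} \<and> v \<in> \<sigma> \<and> (\<forall>u\<in>\<tau>. v < u) \<and> z \<in> convex hull (e ` \<tau>) \<and> t \<in> {0..1}"
    then show "h (t *\<^sub>R e v + (1 - t) *\<^sub>R z) = H v (h z, t)"
      using h(3) unfolding prop2_def by blast
  next
    fix h'
    assume a: "continuous_map (top_of_set (convex hull (e ` \<sigma>))) Y h' \<and>
                  (\<forall>v\<in>\<sigma>. h' (e v) = p v) \<and>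
                  (\<forall>\<tau> v z t. \<tau> \<subseteq> \<sigma> \<and> \<tau> \<noteq> {} \<and> v \<in> \<sigma> \<and> (\<forall>u\<in>\<tau>. v < u) \<and>
                       z \<in> convex hull (e ` \<tau>) \<and> t \<in> {0..1} \<longrightarrow>
                       h' (t *\<^sub>R e v + (1 - t) *\<^sub>R z) = H v (h' z, t))"
    then have "prop2 \<sigma> e H h'" unfolding prop2_def by blast
    then show "\<forall>x\<in>convex hull (e ` \<sigma>). h' x = h x"
      using uniq[of \<sigma> h e p h' H] assms(1,2) h(2,3) a by blast
  qed
qed

end
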